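(* Let $(G,K)$ be a Gelfand pair, $X=G/K$, and let $\Gamma=\sum_{j\in\Lambda}A_j$ be a sum of associates of the $(K\backslash G/K)$-association scheme, where $\Lambda$ indexes some subset of the associates. Then for the $i$th irreducible constituent $V_i$ of $1\uparrow^G_K$, the eigenvalue $\eta_i$ of $\Gamma$ on $V_i$ satisfies \[|\eta_i|\le\sqrt{|X|\,|\Omega_\Lambda|/d_i},\] where $d_i=\dim V_i$ and $\Omega_\Lambda=\bigcup_{j\in\Lambda}\Omega_j$.
   Context: $G$ is a finite group and $K\le G$. $(G,K)$ is a Gelfand pair if the permutation representation $\mathbb{C}[G/K]\cong 1\uparrow^G_K$ is multiplicity-free, $1\uparrow^G_K\cong\bigoplus_{i=1}^m V_i$ with pairwise inequivalent irreducibles $V_i$. The double cosets $KgK$ are indexed by $j$; the sphere $\Omega_j\subseteq X$ is the set of cosets $xK$ with $x$ in the $j$th double coset (equivalently the $K$-orbits on $X$). The associate $A_j$ is the $X\times X$ 0/1 matrix with $(A_j)_{xK,yK}=1$ iff $x^{-1}y$ lies in the $j$th double coset. Each $V_i$ (viewed inside $\mathbb{C}[X]$) is an eigenspace of every $A_j$, and $\eta_i$ is the corresponding eigenvalue of $\Gamma$. *)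

theory Defs
  imports Complex_Main "HOL-Algebra.Coset" "HOL-Library.Function_Algebras"
begin

definition coset_space :: "('a, 'b) monoid_scheme \<Rightarrow> 'a set \<Rightarrow> 'a set set" where
  "coset_space G K = (\<lambda>x. x <#\<^bsub>G\<^esub> K) ` carrier G"

text \<open>C[X]: complex functions on X (represented as functions on 'a set vanishing off X).\<close>
definition CX :: "('a, 'b) monoid_scheme \<Rightarrow> 'a set \<Rightarrow> ('a set \<Rightarrow> complex) set" where
  "CX G K = {f. \<forall>c. c \<notin> coset_space G K \<longrightarrow> f c = 0}"

definition perm_act :: "('a, 'b) monoid_scheme \<Rightarrow> 'a set \<Rightarrow> 'a \<Rightarrow> ('a set \<Rightarrow> complex) \<Rightarrow> ('a set \<Rightarrow> complex)" where
  "perm_act G K g f = (\<lambda>c. if c \<in> coset_space G K then f (inv\<^bsub>G\<^esub> g <#\<^bsub>G\<^esub> c) else 0)"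

definition cscale :: "complex \<Rightarrow> ('a set \<Rightarrow> complex) \<Rightarrow> ('a set \<Rightarrow> complex)" where
  "cscale c f = (\<lambda>x. c * f x)"

text \<open>G-invariant (complex) subspaces of C[X], i.e. subrepresentations of 1 induced from K to G.\<close>
definition inv_subspace :: "('a, 'b) monoid_scheme \<Rightarrow> 'a set \<Rightarrow> ('a set \<Rightarrow> complex) set \<Rightarrow> bool" where
  "inv_subspace G K W \<longleftrightarrow> W \<subseteq> CX G K \<and> 0 \<in> W \<and>
     (\<forall>f\<in>W. \<forall>h\<in>W. f + h \<in> W) \<and> (\<forall>c. \<forall>f\<in>W. cscale c f \<in> W) \<and>
     (\<forall>g\<in>carrier G. \<forall>f\<in>W. perm_act G K g f \<in> W)"

definition irred_subrep :: "('a, 'b) monoid_scheme \<Rightarrow> 'a set \<Rightarrow> ('a set \<Rightarrow> complex) set \<Rightarrow> bool" where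
  "irred_subrep G K W \<longleftrightarrow> inv_subspace G K W \<and> W \<noteq> {0} \<and>
     (\<forall>U. inv_subspace G K U \<and> U \<subseteq> W \<longrightarrow> U = {0} \<or> U = W)"

definition equiv_subrep :: "('a, 'b) monoid_scheme \<Rightarrow> 'a set \<Rightarrow> ('a set \<Rightarrow> complex) set \<Rightarrow> ('a set \<Rightarrow> complex) set \<Rightarrow> bool" where
  "equiv_subrep G K W W' \<longleftrightarrow> (\<exists>\<phi>. bij_betw \<phi> W W' \<and>
     (\<forall>f\<in>W. \<forall>h\<in>W. \<phi> (f + h) = \<phi> f + \<phi> h) \<and>
     (\<forall>c. \<forall>f\<in>W. \<phi> (cscale c f) = cscale c (\<phi> f)) \<and>
     (\<forall>g\<in>carrier G. \<forall>f\<in>W. \<phi> (perm_act G K g f) = perm_act G K g (\<phi> f)))"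

text \<open>A multiplicity-free decomposition C[X] = V_0 (+) ... (+) V_{m-1} into pairwise
  inequivalent irreducible subrepresentations (direct sum: unique decomposition).\<close>
definition mult_free_decomp :: "('a, 'b) monoid_scheme \<Rightarrow> 'a set \<Rightarrow> nat \<Rightarrow> (nat \<Rightarrow> ('a set \<Rightarrow> complex) set) \<Rightarrow> bool" where
  "mult_free_decomp G K m V \<longleftrightarrow>
     (\<forall>i<m. irred_subrep G K (V i)) \<and>
     (\<forall>i<m. \<forall>j<m. i \<noteq> j \<longrightarrow> \<not> equiv_subrep G K (V i) (V j)) \<and>
     (\<forall>f\<in>CX G K. \<exists>!u. (\<forall>i<m. u i \<in> V i) \<and> (\<forall>i\<ge>m. u i = 0) \<and> f = (\<Sum>i<m. u i))"

definition gelfand_pair :: "('a, 'b) monoid_scheme \<Rightarrow> 'a set \<Rightarrow> bool" where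
  "gelfand_pair G K \<longleftrightarrow> group G \<and> finite (carrier G) \<and> subgroup K G \<and>
     (\<exists>m V. mult_free_decomp G K m V)"

definition double_coset :: "('a, 'b) monoid_scheme \<Rightarrow> 'a set \<Rightarrow> 'a \<Rightarrow> 'a set" where
  "double_coset G K g = {k1 \<otimes>\<^bsub>G\<^esub> g \<otimes>\<^bsub>G\<^esub> k2 | k1 k2. k1 \<in> K \<and> k2 \<in> K}"

definition double_cosets :: "('a, 'b) monoid_scheme \<Rightarrow> 'a set \<Rightarrow> 'a set set" where
  "double_cosets G K = double_coset G K ` carrier G"

definition sphere :: "('a, 'b) monoid_scheme \<Rightarrow> 'a set \<Rightarrow> 'a set \<Rightarrow> 'a set set" where
  "sphere G K D = (\<lambda>x. x <#\<^bsub>G\<^esub> K) ` D"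

definition associate :: "('a, 'b) monoid_scheme \<Rightarrow> 'a set \<Rightarrow> 'a set \<Rightarrow> 'a set \<Rightarrow> 'a set \<Rightarrow> complex" where
  "associate G K D c c' = (if \<exists>x\<in>carrier G. \<exists>y\<in>carrier G. c = x <#\<^bsub>G\<^esub> K \<and> c' = y <#\<^bsub>G\<^esub> K \<and>
        inv\<^bsub>G\<^esub> x \<otimes>\<^bsub>G\<^esub> y \<in> D then 1 else 0)"

definition assoc_sum_op :: "('a, 'b) monoid_scheme \<Rightarrow> 'a set \<Rightarrow> 'a set set \<Rightarrow> ('a set \<Rightarrow> complex) \<Rightarrow> ('a set \<Rightarrow> complex)" where
  "assoc_sum_op G K \<Lambda> f = (\<lambda>c. if c \<in> coset_space G K then
      (\<Sum>c'\<in>coset_space G K. (\<Sum>D\<in>\<Lambda>. associate G K D c c') * f c') else 0)"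

definition cdim :: "('a set \<Rightarrow> complex) set \<Rightarrow> nat" where
  "cdim W = vector_space.dim cscale W"

end

theory Submission
  imports Defs
begin


lemma sum_fun_app: "(sum h E) c = (\<Sum>e\<in>E. h e c)"
  by (induction E rule: infinite_finite_induct) auto

interpretation cv: vector_space cscale
  by unfold_locales (auto simp: cscale_def fun_eq_iff algebra_simps)

definition ip :: "'x set \<Rightarrow> ('x \<Rightarrow> complex) \<Rightarrow> ('x \<Rightarrow> complex) \<Rightarrow> complex" where
  "ip X f g = (\<Sum>c\<in>X. f c * cnj (g c))"
definition nsq :: "'x set \<Rightarrow> ('x \<Rightarrow> complex) \<Rightarrow> real" where
  "nsq X f = (\<Sum>c\<in>X. (cmod (f c))^2)"
definition ON :: "'x set \<Rightarrow> ('x \<Rightarrow> complex) set \<Rightarrow> bool" where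
  "ON X E \<longleftrightarrow> (\<forall>e\<in>E. ip X e e = 1) \<and> (\<forall>e\<in>E. \<forall>e'\<in>E. e \<noteq> e' \<longrightarrow> ip X e e' = 0)"

lemma cnorm_sq: "(complex_of_real (cmod z))^2 = z * cnj z"
  by (metis complex_norm_square of_real_power)

lemma ip_self: "ip X f f = of_real (nsq X f)"
  by (simp only: ip_def nsq_def of_real_sum complex_norm_square)
lemma nsq_nonneg: "nsq X f \<ge> 0"
  by (simp add: nsq_def sum_nonneg)
lemma ip_cnj: "ip X g f = cnj (ip X f g)"
  by (simp add: ip_def mult.commute)
lemma ip_add_left: "ip X (f + h) g = ip X f g + ip X h g"
  by (simp add: ip_def distrib_right sum.distrib)
lemma ip_diff_left: "ip X (f - h) g = ip X f g - ip X h g"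
  by (simp add: ip_def left_diff_distrib sum_subtractf)
lemma ip_diff_right: "ip X g (f - h) = ip X g f - ip X g h"
  by (simp add: ip_def right_diff_distrib sum_subtractf)
lemma ip_scale_left: "ip X (cscale a f) g = a * ip X f g"
  by (simp add: ip_def cscale_def sum_distrib_left mult.assoc)
lemma ip_scale_right: "ip X f (cscale a g) = cnj a * ip X f g"
  by (simp add: ip_def cscale_def sum_distrib_left algebra_simps)
lemma ip_sum_left: "ip X (sum h E) g = (\<Sum>e\<in>E. ip X (h e) g)"
  by (simp add: ip_def sum_fun_app sum_distrib_right) (rule sum.swap)
lemma ip_sum_right: "ip X g (sum h E) = (\<Sum>e\<in>E. ip X g (h e))"
  by (subst ip_cnj, simp add: ip_sum_left, subst ip_cnj, simp)

lemma ON_sum_left: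
  assumes "ON X E" "finite E" "e0 \<in> E"
  shows "ip X (\<Sum>e\<in>E. cscale (a e) e) e0 = a e0"
proof -
  have "ip X (\<Sum>e\<in>E. cscale (a e) e) e0 = (\<Sum>e\<in>E. a e * ip X e e0)"
    by (simp add: ip_sum_left ip_scale_left)
  also have "\<dots> = (\<Sum>e\<in>E. if e = e0 then a e else 0)"
    using assms(1) assms(3) unfolding ON_def by (intro sum.cong) auto
  also have "\<dots> = a e0" using assms by simp
  finally show ?thesis .
qed

lemma bessel:
  assumes "ON X E" "finite E"
  fixes r :: "'x set \<Rightarrow> complex"
  shows "(\<Sum>e\<in>E. (cmod (ip X r e))^2) \<le> nsq X r"
proof -
  define a where "a e = ip X r e" for e
  define p where "p = (\<Sum>e\<in>E. cscale (a e) e)"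
  define S where "S = (\<Sum>e\<in>E. (cmod (a e))^2)"
  have pe: "ip X p e = a e" if "e \<in> E" for e
    unfolding p_def using ON_sum_left[OF assms that] .
  have rp: "ip X r p = of_real S"
    by (simp add: p_def S_def ip_sum_right ip_scale_right a_def cnorm_sq mult.commute)
  have pr: "ip X p r = of_real S"
    by (subst ip_cnj, simp add: rp)
  have pp: "ip X p p = of_real S"
  proof -
    have "ip X p p = (\<Sum>e\<in>E. cnj (a e) * ip X p e)"
      by (subst (2) p_def) (simp add: ip_sum_right ip_scale_right)
    also have "\<dots> = (\<Sum>e\<in>E. cnj (a e) * a e)" by (intro sum.cong) (auto simp: pe)
    finally show ?thesis by (simp add: S_def cnorm_sq mult.commute)
  qed
  have "of_real (nsq X (r - p)) = ip X (r - p) (r - p)" by (simp add: ip_self)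
  also have "\<dots> = of_real (nsq X r) - of_real S"
    by (simp only: ip_diff_left ip_diff_right rp pr pp) (simp add: ip_self)
  finally have "nsq X (r - p) = nsq X r - S"
    by (metis of_real_diff of_real_eq_iff)
  with nsq_nonneg[of X "r - p"] show ?thesis by (simp add: S_def a_def)
qed

lemma nsq_zero:
  assumes "finite X" "nsq X f = 0" "c \<in> X" shows "f c = 0"
proof -
  have "\<forall>c\<in>X. (cmod (f c))^2 = 0"
    using assms(2) unfolding nsq_def by (subst sum_nonneg_eq_0_iff[symmetric]) (auto simp: assms(1))
  thus ?thesis using assms(3) by auto
qed

lemma gram_schmidt:
  fixes V :: "('x set \<Rightarrow> complex) set"
  assumes X: "finite X" and sub: "cv.subspace V" and supp: "\<forall>f\<in>V. \<forall>c. c \<notin> X \<longrightarrow> f c = 0"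
  shows "finite B \<Longrightarrow> B \<subseteq> V \<Longrightarrow> \<exists>E. finite E \<and> E \<subseteq> V \<and> ON X E \<and> B \<subseteq> cv.span E"
proof (induction B rule: finite_induct)
  case empty
  show ?case by (rule exI[of _ "{}"]) (auto simp: ON_def)
next
  case (insert b B)
  then obtain E where E: "finite E" "E \<subseteq> V" "ON X E" "B \<subseteq> cv.span E" by auto
  have bV: "b \<in> V" using insert by auto
  define q where "q = (\<Sum>e\<in>E. cscale (ip X b e) e)"
  define b' where "b' = b - q"
  have qV: "q \<in> V" unfolding q_def
    using E(2) by (intro cv.subspace_sum[OF sub] cv.subspace_scale[OF sub]) auto
  have qspan: "q \<in> cv.span E" unfolding q_def
    by (intro cv.span_sum cv.span_scale cv.span_base)
  have b'V: "b' \<in> V" unfolding b'_def by (rule cv.subspace_diff[OF sub bV qV])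
  have orth: "ip X b' e0 = 0" if "e0 \<in> E" for e0
    unfolding b'_def q_def using ON_sum_left[OF E(3) E(1) that, of "\<lambda>e. ip X b e"]
    by (simp add: ip_diff_left)
  have bq: "b = b' + q" by (simp add: b'_def)
  show ?case
  proof (cases "nsq X b' = 0")
    case True
    have "b' = 0"
    proof
      fix c show "b' c = 0 c"
        using nsq_zero[OF X True] supp b'V by (cases "c \<in> X") auto
    qed
    hence "b \<in> cv.span E" using bq qspan by simp
    thus ?thesis using E by auto
  next
    case False
    hence pos: "nsq X b' > 0" using nsq_nonneg[of X b'] by linarith
    define s where "s = sqrt (nsq X b')"
    have spos: "s > 0" using pos by (simp add: s_def)
    have s2: "s * s = nsq X b'" using pos by (simp add: s_def)
    define e' where "e' = cscale (of_real (1/s)) b'"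
    have e'V: "e' \<in> V" unfolding e'_def by (rule cv.subspace_scale[OF sub b'V])
    have o1: "ip X e' e0 = 0" if "e0 \<in> E" for e0
      by (simp add: e'_def ip_scale_left orth[OF that])
    have o2: "ip X e0 e' = 0" if "e0 \<in> E" for e0
      by (subst ip_cnj) (simp add: o1[OF that])
    have n1: "ip X e' e' = 1"
    proof -
      have "ip X e' e' = of_real (1/s) * of_real (1/s) * of_real (nsq X b')"
        by (simp only: e'_def ip_scale_left ip_scale_right) (simp add: ip_self)
      also have "\<dots> = of_real ((1/s) * (1/s) * (s * s))" by (simp only: s2 of_real_mult)
      also have "\<dots> = 1" using spos by simp
      finally show ?thesis .
    qed
    have ON': "ON X (insert e' E)"
      using E(3) o1 o2 n1 unfolding ON_def by auto
    have "b' = cscale (of_real s) e'" using spos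
      by (simp add: e'_def cscale_def fun_eq_iff)
    hence "b' \<in> cv.span (insert e' E)"
      by (simp add: cv.span_scale cv.span_base)
    moreover have "q \<in> cv.span (insert e' E)"
      using qspan cv.span_mono[of E "insert e' E"] by auto
    ultimately have "b \<in> cv.span (insert e' E)" using bq cv.span_add by metis
    moreover have "B \<subseteq> cv.span (insert e' E)"
      using E(4) cv.span_mono[of E "insert e' E"] by auto
    ultimately show ?thesis using E(1,2) e'V ON'
      by (intro exI[of _ "insert e' E"]) auto
  qed
qed

lemma abstract_bound:
  fixes V :: "('x set \<Rightarrow> complex) set" and M :: "'x set \<Rightarrow> 'x set \<Rightarrow> complex"
  assumes X: "finite X" and sub: "cv.subspace V" and supp: "\<forall>f\<in>V. \<forall>c. c \<notin> X \<longrightarrow> f c = 0"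
    and eig: "\<forall>f\<in>V. (\<lambda>c. if c \<in> X then (\<Sum>c'\<in>X. M c c' * f c') else 0) = cscale \<eta> f"
  shows "(cmod \<eta>)^2 * real (cv.dim V) \<le> (\<Sum>c\<in>X. nsq X (\<lambda>c'. cnj (M c c')))
     \<and> (\<not> V \<subseteq> {0} \<longrightarrow> cv.dim V > 0)"
proof -
  define dl where "dl c = (\<lambda>x. if x = c then 1 else (0::complex))" for c :: "'x set"
  have fD: "finite (dl ` X)" using X by simp
  have VD: "V \<subseteq> cv.span (dl ` X)"
  proof
    fix f assume fV: "f \<in> V"
    have "f = (\<Sum>c\<in>X. cscale (f c) (dl c))"
    proof
      fix x
      have "(\<Sum>c\<in>X. cscale (f c) (dl c)) x = (\<Sum>c\<in>X. if x = c then f c else 0)"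
        by (simp add: sum_fun_app cscale_def dl_def) (rule sum.cong[OF refl], simp)
      also have "\<dots> = (if x \<in> X then f x else 0)" using X by (simp add: sum.delta)
      finally show "f x = (\<Sum>c\<in>X. cscale (f c) (dl c)) x"
        using supp fV by auto
    qed
    also have "\<dots> \<in> cv.span (dl ` X)"
      by (intro cv.span_sum cv.span_scale cv.span_base) auto
    finally show "f \<in> cv.span (dl ` X)" .
  qed
  obtain B where B: "B \<subseteq> V" "cv.independent B" "V \<subseteq> cv.span B" "card B = cv.dim V"
    using cv.basis_exists by blast
  have fB: "finite B" using cv.independent_span_bound[OF fD B(2)] B(1) VD by auto
  obtain E where E: "finite E" "E \<subseteq> V" "ON X E" "B \<subseteq> cv.span E"
    using gram_schmidt[OF X sub supp fB B(1)] by blast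
  have "cv.span B \<subseteq> cv.span E"
    using cv.span_mono[OF E(4)] by (simp only: cv.span_span)
  hence "V \<subseteq> cv.span E" using B(3) by (rule order.trans[rotated])
  hence dimE: "cv.dim V \<le> card E" by (rule cv.dim_le_card[OF _ E(1)])
  have each: "(\<Sum>c\<in>X. (cmod (ip X (\<lambda>c'. cnj (M c c')) e))^2) = (cmod \<eta>)^2" if eE: "e \<in> E" for e
  proof -
    have eV: "e \<in> V" using eE E(2) by auto
    have n1: "nsq X e = 1" using E(3) eE unfolding ON_def by (metis ip_self of_real_eq_1_iff)
    have "(\<Sum>c\<in>X. (cmod (ip X (\<lambda>c'. cnj (M c c')) e))^2) = (\<Sum>c\<in>X. (cmod \<eta>)^2 * (cmod (e c))^2)"
    proof (rule sum.cong[OF refl])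
      fix c assume cX: "c \<in> X"
      have "(\<lambda>c. if c \<in> X then (\<Sum>c'\<in>X. M c c' * e c') else 0) = cscale \<eta> e"
        using eig eV by blast
      hence "(\<lambda>c. if c \<in> X then (\<Sum>c'\<in>X. M c c' * e c') else 0) c = cscale \<eta> e c"
        by (rule fun_cong)
      hence "(\<Sum>c'\<in>X. M c c' * e c') = \<eta> * e c" using cX by (simp add: cscale_def)
      moreover have "ip X (\<lambda>c'. cnj (M c c')) e = cnj (\<Sum>c'\<in>X. M c c' * e c')"
        by (simp add: ip_def)
      ultimately show "(cmod (ip X (\<lambda>c'. cnj (M c c')) e))^2 = (cmod \<eta>)^2 * (cmod (e c))^2"
        by (simp add: norm_mult power_mult_distrib)
    qed
    also have "\<dots> = (cmod \<eta>)^2 * nsq X e" by (simp add: nsq_def sum_distrib_left)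
    finally show ?thesis using n1 by simp
  qed
  have "(cmod \<eta>)^2 * real (cv.dim V) \<le> (cmod \<eta>)^2 * real (card E)"
    using dimE by (intro mult_left_mono) auto
  also have "\<dots> = (\<Sum>e\<in>E. \<Sum>c\<in>X. (cmod (ip X (\<lambda>c'. cnj (M c c')) e))^2)"
    using each by simp
  also have "\<dots> = (\<Sum>c\<in>X. \<Sum>e\<in>E. (cmod (ip X (\<lambda>c'. cnj (M c c')) e))^2)"
    by (rule sum.swap)
  also have "\<dots> \<le> (\<Sum>c\<in>X. nsq X (\<lambda>c'. cnj (M c c')))"
    by (intro sum_mono bessel E(3) E(1))
  finally have main: "(cmod \<eta>)^2 * real (cv.dim V) \<le> (\<Sum>c\<in>X. nsq X (\<lambda>c'. cnj (M c c')))" .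
  have "\<not> V \<subseteq> {0} \<longrightarrow> cv.dim V > 0"
  proof
    assume nV: "\<not> V \<subseteq> {0}"
    show "cv.dim V > 0"
    proof (rule ccontr)
      assume "\<not> cv.dim V > 0"
      hence "B = {}" using B(4) fB by simp
      hence "V \<subseteq> {0}" using B(3) cv.span_empty by simp
      thus False using nV by simp
    qed
  qed
  with main show ?thesis by simp
qed



context group begin

lemma dc_sub: "g \<in> carrier G \<Longrightarrow> subgroup K G \<Longrightarrow> double_coset G K g \<subseteq> carrier G"
  unfolding double_coset_def by (auto dest: subgroup.mem_carrier)

lemma dc_left:
  assumes "subgroup K G" "g \<in> carrier G" "z \<in> double_coset G K g" "k \<in> K"
  shows "k \<otimes> z \<in> double_coset G K g"
proof -
  obtain k1 k2 where z: "z = k1 \<otimes> g \<otimes> k2" "k1 \<in> K" "k2 \<in> K"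
    using assms(3) unfolding double_coset_def by auto
  have c: "k \<in> carrier G" "k1 \<in> carrier G" "k2 \<in> carrier G"
    using z assms by (auto dest: subgroup.mem_carrier)
  have "k \<otimes> z = (k \<otimes> k1) \<otimes> g \<otimes> k2" using c assms(2) z by (simp add: m_assoc)
  moreover have "k \<otimes> k1 \<in> K" using assms z by (simp add: subgroup.m_closed)
  ultimately show ?thesis using z unfolding double_coset_def by blast
qed

lemma dc_right:
  assumes "subgroup K G" "g \<in> carrier G" "z \<in> double_coset G K g" "k \<in> K"
  shows "z \<otimes> k \<in> double_coset G K g"
proof -
  obtain k1 k2 where z: "z = k1 \<otimes> g \<otimes> k2" "k1 \<in> K" "k2 \<in> K"
    using assms(3) unfolding double_coset_def by auto
  have c: "k \<in> carrier G" "k1 \<in> carrier G" "k2 \<in> carrier G"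
    using z assms by (auto dest: subgroup.mem_carrier)
  have "z \<otimes> k = k1 \<otimes> g \<otimes> (k2 \<otimes> k)" using c assms(2) z by (simp add: m_assoc)
  moreover have "k2 \<otimes> k \<in> K" using assms z by (simp add: subgroup.m_closed)
  ultimately show ?thesis using z unfolding double_coset_def by blast
qed

lemma dc_self:
  assumes "subgroup K G" "g \<in> carrier G"
  shows "g \<in> double_coset G K g"
proof -
  have "g = \<one> \<otimes> g \<otimes> \<one>" using assms by simp
  thus ?thesis unfolding double_coset_def using assms subgroup.one_closed by blast
qed

lemma dc_eq:
  assumes K: "subgroup K G" and g: "g \<in> carrier G" and zD: "z \<in> double_coset G K g"
  shows "double_coset G K z = double_coset G K g"
proof -
  have zc: "z \<in> carrier G" using dc_sub[OF g K] zD by auto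
  obtain a b where ab: "z = a \<otimes> g \<otimes> b" "a \<in> K" "b \<in> K"
    using zD unfolding double_coset_def by auto
  have c: "a \<in> carrier G" "b \<in> carrier G" using ab K by (auto dest: subgroup.mem_carrier)
  have "inv a \<otimes> z \<otimes> inv b = g" using ab c g by (simp add: m_assoc flip: m_assoc[of "inv a"])
  moreover have "inv a \<otimes> z \<otimes> inv b \<in> double_coset G K z"
    by (intro dc_left dc_right dc_self K zc) (auto simp: ab K subgroup.m_inv_closed)
  ultimately have gz: "g \<in> double_coset G K z" by simp
  show ?thesis
  proof
    show "double_coset G K z \<subseteq> double_coset G K g"
    proof
      fix w assume "w \<in> double_coset G K z"
      then obtain k1 k2 where w: "w = k1 \<otimes> z \<otimes> k2" "k1 \<in> K" "k2 \<in> K"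
        unfolding double_coset_def by auto
      show "w \<in> double_coset G K g" unfolding w(1)
        by (intro dc_left dc_right K g zD w)
    qed
    show "double_coset G K g \<subseteq> double_coset G K z"
    proof
      fix w assume "w \<in> double_coset G K g"
      then obtain k1 k2 where w: "w = k1 \<otimes> g \<otimes> k2" "k1 \<in> K" "k2 \<in> K"
        unfolding double_coset_def by auto
      show "w \<in> double_coset G K z" unfolding w(1)
        by (intro dc_left dc_right K zc gz w)
    qed
  qed
qed

lemma dc_disj:
  assumes K: "subgroup K G" "g1 \<in> carrier G" "g2 \<in> carrier G"
    "z \<in> double_coset G K g1" "z \<in> double_coset G K g2"
  shows "double_coset G K g1 = double_coset G K g2"
  using dc_eq[OF K(1,2,4)] dc_eq[OF K(1,3,5)] by simp

lemma in_lcos: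
  assumes K: "subgroup K G" "x \<in> carrier G" "x' \<in> carrier G" "x' <# K = x <# K"
  shows "\<exists>k\<in>K. x' = x \<otimes> k"
proof -
  have "x' \<in> x' <# K" unfolding l_coset_def using K subgroup.one_closed[OF K(1)]
    by (force intro: bexI[of _ \<one>])
  thus ?thesis using K(4) unfolding l_coset_def by auto
qed

end


lemma (in group) row_bound:
  fixes \<Lambda> :: "'a set set"
  assumes fin: "finite (carrier G)" and K: "subgroup K G"
    and L: "\<Lambda> \<subseteq> double_cosets G K" and cX: "c \<in> coset_space G K"
  shows "nsq (coset_space G K) (\<lambda>c'. cnj (\<Sum>D\<in>\<Lambda>. associate G K D c c'))
         \<le> real (card (\<Union>D\<in>\<Lambda>. sphere G K D))"
proof -
  define X where "X = coset_space G K"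
  define \<Omega> where "\<Omega> = (\<Union>D\<in>\<Lambda>. sphere G K D)"
  define M where "M c' = (\<Sum>D\<in>\<Lambda>. associate G K D c c')" for c'
  obtain x0 where x0: "x0 \<in> carrier G" "c = x0 <# K"
    using cX unfolding coset_space_def by auto
  define \<phi> where "\<phi> c' = inv x0 <# c'" for c'
  have finX: "finite X" unfolding X_def coset_space_def using fin by simp
  have finL: "finite \<Lambda>" using L fin unfolding double_cosets_def by (meson finite_imageI finite_subset)
  have Ksub: "K \<subseteq> carrier G" using K by (rule subgroup.subset)
  have OX: "\<Omega> \<subseteq> X"
  proof
    fix s assume "s \<in> \<Omega>"
    then obtain D z where "D \<in> \<Lambda>" "z \<in> D" "s = z <# K" unfolding \<Omega>_def sphere_def by auto
    moreover obtain g where "g \<in> carrier G" "D = double_coset G K g"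
      using L \<open>D \<in> \<Lambda>\<close> unfolding double_cosets_def by auto
    ultimately show "s \<in> X" unfolding X_def coset_space_def using dc_sub[OF _ K] by auto
  qed
  have finO: "finite \<Omega>" using OX finX finite_subset by blast
  have key: "(cmod (cnj (M c')))^2 \<le> (if \<phi> c' \<in> \<Omega> then 1 else 0)" if c'X: "c' \<in> X" for c'
  proof (cases "\<exists>D\<in>\<Lambda>. associate G K D c c' \<noteq> 0")
    case False
    hence "M c' = 0" unfolding M_def by simp
    thus ?thesis by simp
  next
    case True
    then obtain D0 where D0: "D0 \<in> \<Lambda>" "associate G K D0 c c' \<noteq> 0" by auto
    then obtain x y where xy: "x \<in> carrier G" "y \<in> carrier G" "c = x <# K" "c' = y <# K"
      "inv x \<otimes> y \<in> D0"
      unfolding associate_def by (auto split: if_splits)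
    obtain g0 where g0: "g0 \<in> carrier G" "D0 = double_coset G K g0"
      using L D0 unfolding double_cosets_def by auto
    have uniq: "D = D0" if DL: "D \<in> \<Lambda>" "associate G K D c c' \<noteq> 0" for D
    proof -
      obtain x2 y2 where xy2: "x2 \<in> carrier G" "y2 \<in> carrier G" "c = x2 <# K" "c' = y2 <# K"
        "inv x2 \<otimes> y2 \<in> D"
        using DL unfolding associate_def by (auto split: if_splits)
      obtain g where g: "g \<in> carrier G" "D = double_coset G K g"
        using L DL unfolding double_cosets_def by auto
      obtain k where k: "k \<in> K" "x2 = x \<otimes> k" using in_lcos[OF K xy(1) xy2(1)] xy xy2 by auto
      obtain k' where k': "k' \<in> K" "y2 = y \<otimes> k'" using in_lcos[OF K xy(2) xy2(2)] xy xy2 by auto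
      have kc: "k \<in> carrier G" "k' \<in> carrier G" using k k' Ksub by auto
      have "inv x2 \<otimes> y2 = inv k \<otimes> (inv x \<otimes> y) \<otimes> k'"
        using k k' kc xy by (simp add: inv_mult_group m_assoc)
      also have "\<dots> \<in> D0" unfolding g0(2)
        by (rule dc_right[OF K g0(1) dc_left[OF K g0(1)] k'(1)])
           (use xy g0 k K subgroup.m_inv_closed in auto)
      finally have in0: "inv x2 \<otimes> y2 \<in> double_coset G K g0" using g0(2) by simp
      have in1: "inv x2 \<otimes> y2 \<in> double_coset G K g" using xy2(5) g(2) by simp
      show ?thesis using dc_disj[OF K g(1) g0(1) in1 in0] g(2) g0(2) by simp
    qed
    have A1: "associate G K D0 c c' = 1" using D0(2) unfolding associate_def by (auto split: if_splits)
    hence "M c' = (\<Sum>D\<in>\<Lambda>. if D = D0 then 1 else 0)"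
      unfolding M_def
    proof (intro sum.cong refl)
      fix D assume "D \<in> \<Lambda>"
      thus "associate G K D c c' = (if D = D0 then 1 else 0)"
        using uniq[of D] A1 by (cases "D = D0") auto
    qed
    hence M1: "M c' = 1" using finL D0(1) by simp
    obtain k0 where k0: "k0 \<in> K" "x0 = x \<otimes> k0" using in_lcos[OF K xy(1) x0(1)] x0 xy by auto
    have k0c: "k0 \<in> carrier G" using k0 Ksub by auto
    have "inv x0 \<otimes> y = inv k0 \<otimes> (inv x \<otimes> y)" using k0 k0c xy by (simp add: inv_mult_group m_assoc)
    also have "\<dots> \<in> D0" unfolding g0(2)
      by (rule dc_left[OF K g0(1)]) (use xy g0 k0 K subgroup.m_inv_closed in auto)
    finally have inD0: "inv x0 \<otimes> y \<in> D0" .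
    have "\<phi> c' = (inv x0 \<otimes> y) <# K" unfolding \<phi>_def xy(4)
      using lcos_m_assoc[OF Ksub _ xy(2), of "inv x0"] x0 by simp
    hence "\<phi> c' \<in> \<Omega>" unfolding \<Omega>_def sphere_def using inD0 D0(1) by auto
    thus ?thesis using M1 by simp
  qed
  have inj: "inj_on \<phi> X"
  proof
    fix c1 c2 assume c12: "c1 \<in> X" "c2 \<in> X" "\<phi> c1 = \<phi> c2"
    obtain y1 y2 where y: "y1 \<in> carrier G" "c1 = y1 <# K" "y2 \<in> carrier G" "c2 = y2 <# K"
      using c12 unfolding X_def coset_space_def by auto
    have e1: "x0 \<otimes> (inv x0 \<otimes> y1) = y1" using x0 y by (metis m_assoc r_inv l_one inv_closed)
    have "x0 <# \<phi> c1 = c1" unfolding \<phi>_def y(2)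
      using lcos_m_assoc[OF Ksub _ y(1), of "inv x0"] lcos_m_assoc[OF Ksub x0(1), of "inv x0 \<otimes> y1"] x0 y e1
      by simp
    moreover have "x0 <# \<phi> c2 = c2" unfolding \<phi>_def y(4)
      using lcos_m_assoc[OF Ksub _ y(3), of "inv x0"] lcos_m_assoc[OF Ksub x0(1), of "inv x0 \<otimes> y2"] x0 y
      by (simp add: m_assoc[symmetric])
    ultimately show "c1 = c2" using c12(3) by metis
  qed
  have "nsq X (\<lambda>c'. cnj (M c')) \<le> (\<Sum>c'\<in>X. if \<phi> c' \<in> \<Omega> then 1 else 0)"
    unfolding nsq_def by (intro sum_mono key)
  also have "\<dots> = real (card {c'\<in>X. \<phi> c' \<in> \<Omega>})"
    using finX by (simp add: sum.If_cases Int_def conj_commute)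
  also have "card {c'\<in>X. \<phi> c' \<in> \<Omega>} \<le> card \<Omega>"
    by (rule card_inj_on_le[OF _ _ finO]) (use inj in \<open>auto intro: inj_on_subset\<close>)
  finally show ?thesis unfolding X_def M_def \<Omega>_def by simp
qed


theorem mainTheorem18:
  fixes G :: "('a, 'b) monoid_scheme" and K :: "'a set"
    and m :: nat and V :: "nat \<Rightarrow> ('a set \<Rightarrow> complex) set"
    and \<Lambda> :: "'a set set" and i :: nat and \<eta> :: complex
  assumes "gelfand_pair G K"
    and "mult_free_decomp G K m V"
    and "\<Lambda> \<subseteq> double_cosets G K"
    and "i < m"
    and "\<forall>f\<in>V i. assoc_sum_op G K \<Lambda> f = cscale \<eta> f"
  shows "cmod \<eta> \<le> sqrt (real (card (coset_space G K)) * real (card (\<Union>D\<in>\<Lambda>. sphere G K D))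
                        / real (cdim (V i)))"
proof -
  have grp: "group G" and fin: "finite (carrier G)" and K: "subgroup K G"
    using assms(1) unfolding gelfand_pair_def by auto
  define X where "X = coset_space G K"
  define \<Omega> where "\<Omega> = (\<Union>D\<in>\<Lambda>. sphere G K D)"
  have finX: "finite X" unfolding X_def coset_space_def using fin by simp
  have irr: "irred_subrep G K (V i)" using assms(2,4) unfolding mult_free_decomp_def by auto
  hence isub: "inv_subspace G K (V i)" and nz: "V i \<noteq> {0}" unfolding irred_subrep_def by auto
  have sub: "cv.subspace (V i)" using isub unfolding inv_subspace_def cv.subspace_def by auto
  have supp: "\<forall>f\<in>V i. \<forall>c. c \<notin> X \<longrightarrow> f c = 0"
    using isub unfolding inv_subspace_def CX_def X_def by auto
  have eig: "\<forall>f\<in>V i. (\<lambda>c. if c \<in> X then (\<Sum>c'\<in>X. (\<Sum>D\<in>\<Lambda>. associate G K D c c') * f c') else 0) = cscale \<eta> f"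
    using assms(5) unfolding assoc_sum_op_def X_def by simp
  have ab0: "(cmod \<eta>)^2 * real (cv.dim (V i)) \<le> (\<Sum>c\<in>X. nsq X (\<lambda>c'. cnj (\<Sum>D\<in>\<Lambda>. associate G K D c c')))"
    and dp: "\<not> V i \<subseteq> {0} \<longrightarrow> cv.dim (V i) > 0"
    using abstract_bound[OF finX sub supp, of "\<lambda>c c'. \<Sum>D\<in>\<Lambda>. associate G K D c c'" \<eta>] eig by simp_all
  have "(cmod \<eta>)^2 * real (cv.dim (V i)) \<le> (\<Sum>c\<in>X. nsq X (\<lambda>c'. cnj (\<Sum>D\<in>\<Lambda>. associate G K D c c')))"
    by (rule ab0)
  also have "\<dots> \<le> (\<Sum>c\<in>X. real (card \<Omega>))"
    unfolding X_def \<Omega>_def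
    by (intro sum_mono group.row_bound[OF grp fin K assms(3)])
  also have "\<dots> = real (card X) * real (card \<Omega>)" by simp
  finally have ineq: "(cmod \<eta>)^2 * real (cdim (V i)) \<le> real (card X) * real (card \<Omega>)"
    unfolding cdim_def .
  have "0 \<in> V i" using isub unfolding inv_subspace_def by auto
  hence "\<not> V i \<subseteq> {0}" using nz by auto
  hence "cdim (V i) \<noteq> 0" unfolding cdim_def using dp by simp
  hence dpos: "real (cdim (V i)) > 0" by simp
  have "(cmod \<eta>)^2 \<le> real (card X) * real (card \<Omega>) / real (cdim (V i))"
    using ineq dpos by (simp add: pos_le_divide_eq)
  hence "cmod \<eta> \<le> sqrt (real (card X) * real (card \<Omega>) / real (cdim (V i)))"
    by (rule real_le_rsqrt)
  thus ?thesis unfolding X_def \<Omega>_def .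
qed

end
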